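(* Let $(\boldsymbol{x}_i)_{i\geq 0}$ be the two-dimensional Sobol' sequence in $[0,1]^2$, and for $n\geq 1$ let $P_n=(\boldsymbol{x}_i)_{0\leq i<n}$ and $q(P_n)=\frac{1}{2}\min_{0\leq i<j<n}\|\boldsymbol{x}_i-\boldsymbol{x}_j\|$, where $\|\cdot\|$ is the Euclidean norm. If $n=2^{m}-1$ where $m=2^w-1$ for some integer $w>1$, then \[ q(P_n)=\frac{1}{\sqrt{2}(n+1)}. \]
   Context: The two-dimensional Sobol' sequence is defined as follows. For a non-negative integer $n$ with binary expansion $n=n_0+n_1 2+n_2 2^2+\cdots$ ($n_k\in\{0,1\}$, finitely many nonzero), the $n$-th point is $\boldsymbol{x}_n=(x_{n,1},x_{n,2})$ with $x_{n,j}=\sum_{k\geq 1} x_{n,j,k}2^{-k}$, where $(x_{n,j,1},x_{n,j,2},\ldots)^\top = C_j (n_0,n_1,n_2,\ldots)^\top \bmod 2$ (componentwise), for $j=1,2$. The infinite generating matrices $C_1=(c^{(1)}_{i,k})_{i,k\geq 1}$ and $C_2=(c^{(2)}_{i,k})_{i,k\geq1}$ are given by $c^{(1)}_{i,k}=1$ if $i=k$ and $0$ otherwise (identity matrix), and $c^{(2)}_{i,k}=\binom{k-1}{i-1}\bmod 2$ (Pascal matrix over $\mathbb{F}_2$), with the convention $\binom{a}{b}=0$ if $a<b$. The sequence is indexed starting from $\boldsymbol{x}_0$. *)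

theory Defs
  imports "HOL-Analysis.Analysis"
begin

definition digit :: "nat \<Rightarrow> nat \<Rightarrow> nat" where
  "digit n k = (n div 2 ^ k) mod 2"

text \<open>Generating matrices, indices i,k \<ge> 1.\<close>
definition C1 :: "nat \<Rightarrow> nat \<Rightarrow> nat" where
  "C1 i k = (if i = k then 1 else 0)"

definition C2 :: "nat \<Rightarrow> nat \<Rightarrow> nat" where
  "C2 i k = ((k - 1) choose (i - 1)) mod 2"

text \<open>The k-th digit (k \<ge> 1) of coordinate given by matrix C: (C (n_0,n_1,...)^T)_i mod 2.
  Since digit n (k-1) = 0 for k > n, the sum over k \<in> {1..n} is the full (finite-support) sum.\<close>
definition sobol_digit :: "(nat \<Rightarrow> nat \<Rightarrow> nat) \<Rightarrow> nat \<Rightarrow> nat \<Rightarrow> nat" where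
  "sobol_digit C n i = (\<Sum>k\<in>{1..n}. C i k * digit n (k - 1)) mod 2"

definition sobol_coord :: "(nat \<Rightarrow> nat \<Rightarrow> nat) \<Rightarrow> nat \<Rightarrow> real" where
  "sobol_coord C n = (\<Sum>i. real (sobol_digit C n (Suc i)) / 2 ^ (Suc i))"

definition sobol :: "nat \<Rightarrow> real \<times> real" where
  "sobol n = (sobol_coord C1 n, sobol_coord C2 n)"

definition sep_radius :: "nat \<Rightarrow> real" where
  "sep_radius n = Min {dist (sobol i) (sobol j) | i j. i < j \<and> j < n} / 2"

end

theory Submission
  imports Defs
begin

lemma digit_le1: "digit n k \<le> 1"
  unfolding digit_def by simp

lemma digit_big: assumes "(n::nat) < 2 ^ m" "m \<le> k" shows "digit n k = 0"
proof -
  have "(2::nat) ^ m \<le> 2 ^ k" using assms(2) by (simp add: power_increasing)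
  then have "n div 2 ^ k = 0" using assms(1) by (simp add: div_less order.strict_trans2)
  then show ?thesis unfolding digit_def by simp
qed

lemma digit_big2: assumes "n \<le> k" shows "digit n k = 0"
proof -
  have "n < 2 ^ n" by simp
  then show ?thesis using digit_big assms by blast
qed

definition upper :: "(nat \<Rightarrow> nat \<Rightarrow> nat) \<Rightarrow> bool" where
  "upper C \<longleftrightarrow> (\<forall>i k. 0 < k \<longrightarrow> k < i \<longrightarrow> C i k = 0)"

lemma upper_C1: "upper C1" unfolding upper_def C1_def by auto
lemma upper_C2: "upper C2" unfolding upper_def C2_def
  by (auto simp: binomial_eq_0)

lemma sd_alt:
  assumes "n < 2 ^ m"
  shows "sobol_digit C n i = (\<Sum>k\<in>{1..m}. C i k * digit n (k - 1)) mod 2"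
proof -
  have "(\<Sum>k\<in>{1..n}. C i k * digit n (k - 1)) = (\<Sum>k\<in>{1..max n m}. C i k * digit n (k - 1))"
    by (rule sum.mono_neutral_left) (auto simp: digit_big2)
  also have "\<dots> = (\<Sum>k\<in>{1..m}. C i k * digit n (k - 1))"
    by (rule sum.mono_neutral_right) (auto simp: digit_big[OF assms])
  finally show ?thesis unfolding sobol_digit_def by simp
qed

lemma sd_le1: "sobol_digit C n i \<le> 1"
  unfolding sobol_digit_def by simp

lemma sd_zero:
  assumes "n < 2 ^ m" "upper C" "m < i"
  shows "sobol_digit C n i = 0"
  unfolding sd_alt[OF assms(1)] using assms(2,3) by (auto simp: upper_def intro!: sum.neutral)

lemma coord_finite:
  assumes "n < 2 ^ m" "upper C"
  shows "sobol_coord C n = (\<Sum>i<m. real (sobol_digit C n (Suc i)) / 2 ^ Suc i)"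
proof -
  have "(\<lambda>i. real (sobol_digit C n (Suc i)) / 2 ^ Suc i) sums (\<Sum>i\<in>{..<m}. real (sobol_digit C n (Suc i)) / 2 ^ Suc i)"
    by (rule sums_finite) (auto simp: sd_zero[OF assms])
  then show ?thesis unfolding sobol_coord_def by (simp add: sums_iff)
qed

definition Xv :: "(nat \<Rightarrow> nat \<Rightarrow> nat) \<Rightarrow> nat \<Rightarrow> nat \<Rightarrow> nat" where
  "Xv C m n = (\<Sum>i<m. sobol_digit C n (Suc i) * 2 ^ (m - Suc i))"

lemma coord_Xv:
  assumes "n < 2 ^ m" "upper C"
  shows "sobol_coord C n = real (Xv C m n) / 2 ^ m"
proof -
  have "(\<Sum>i<m. real (sobol_digit C n (Suc i)) / 2 ^ Suc i)
      = (\<Sum>i<m. real (sobol_digit C n (Suc i) * 2 ^ (m - Suc i)) / 2 ^ m)"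
  proof (rule sum.cong)
    fix i assume "i \<in> {..<m}"
    then have "m - Suc i + Suc i = m" by simp
    then have e: "(2::real) ^ m = 2 ^ (m - Suc i) * 2 ^ Suc i"
      by (metis power_add)
    show "real (sobol_digit C n (Suc i)) / 2 ^ Suc i = real (sobol_digit C n (Suc i) * 2 ^ (m - Suc i)) / 2 ^ m"
      unfolding e by simp
  qed simp
  then show ?thesis unfolding coord_finite[OF assms] Xv_def
    by (simp add: sum_divide_distrib)
qed

lemma digit_sum:
  assumes "\<forall>j. e j \<le> (1::nat)" "k < m"
  shows "digit (\<Sum>j<m. e j * 2 ^ j) k = e k"
  using assms
proof (induction m arbitrary: e k)
  case 0 then show ?case by simp
next
  case (Suc m)
  have s: "(\<Sum>j<Suc m. e j * 2 ^ j) = e 0 + 2 * (\<Sum>j<m. e (Suc j) * 2 ^ j)"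
    unfolding sum.lessThan_Suc_shift by (simp add: sum_distrib_left mult.assoc mult.left_commute)
  have e0: "e 0 \<le> 1" using Suc.prems by simp
  show ?case
  proof (cases k)
    case 0 then show ?thesis unfolding s digit_def using e0 by auto
  next
    case (Suc k')
    have "digit (\<Sum>j<Suc m. e j * 2 ^ j) k = digit (\<Sum>j<m. e (Suc j) * 2 ^ j) k'"
      unfolding s digit_def Suc using e0 by (simp add: div_mult2_eq)
    also have "\<dots> = e (Suc k')" using Suc.IH[of "\<lambda>j. e (Suc j)" k'] Suc.prems Suc by simp
    finally show ?thesis using Suc by simp
  qed
qed

lemma Xv_inj:
  assumes "Xv C m a = Xv C m b" "i \<in> {1..m}"
  shows "sobol_digit C a i = sobol_digit C b i"
proof -
  have r: "Xv C m n = (\<Sum>j<m. sobol_digit C n (m - j) * 2 ^ j)" for n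
  proof -
    have "(\<Sum>j<m. sobol_digit C n (m - j) * 2 ^ j) = (\<Sum>j<m. sobol_digit C n (m - (m - Suc j)) * 2 ^ (m - Suc j))"
      by (rule sum.nat_diff_reindex[symmetric])
    also have "\<dots> = Xv C m n" unfolding Xv_def
      by (rule sum.cong) (auto simp: Suc_diff_Suc)
    finally show ?thesis by simp
  qed
  have le: "\<forall>j. sobol_digit C n (m - j) \<le> 1" for n using sd_le1 by blast
  have mi: "m - i < m" "m - (m - i) = i" using assms(2) by auto
  have "digit (Xv C m a) (m - i) = sobol_digit C a i" "digit (Xv C m b) (m - i) = sobol_digit C b i"
    unfolding r using digit_sum[OF le mi(1)] mi(2) by simp_all
  then show ?thesis using assms(1) by simp
qed

lemma digit_eq_all:
  assumes "\<forall>k. digit a k = digit b k" shows "a = b"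
proof -
  have "bit a n = bit b n" for n
  proof -
    have "digit a n = digit b n" using assms by blast
    then show "bit a n = bit b n" unfolding digit_def bit_iff_odd by (metis odd_iff_mod_2_eq_one)
  qed
  then show ?thesis using bit_eq_iff by blast
qed

lemma diff_digit:
  assumes "a < 2 ^ m" "b < 2 ^ m" "a \<noteq> b" "upper C" "\<forall>i. 0 < i \<longrightarrow> C i i = 1"
  shows "\<exists>i\<in>{1..m}. sobol_digit C a i \<noteq> sobol_digit C b i"
proof -
  let ?S = "{k. digit a k \<noteq> digit b k}"
  have ne: "?S \<noteq> {}" using digit_eq_all assms(3) by blast
  have sub: "?S \<subseteq> {..<m}"
  proof
    fix k assume "k \<in> ?S"
    then show "k \<in> {..<m}" using digit_big[OF assms(1), of k] digit_big[OF assms(2), of k]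
      by (cases "m \<le> k") auto
  qed
  have fin: "finite ?S" using sub finite_subset by blast
  define t where "t = Max ?S"
  have tS: "t \<in> ?S" unfolding t_def using Max_in[OF fin ne] .
  have tm: "t < m" using tS sub by blast
  have above: "digit a k = digit b k" if "t < k" for k
    using Max_ge[OF fin, of k] that unfolding t_def[symmetric] by (cases "digit a k = digit b k") auto
  have split: "(\<Sum>k\<in>{1..m}. C (Suc t) k * digit n (k - 1)) =
      digit n t + (\<Sum>k\<in>{1..m} - {Suc t}. C (Suc t) k * digit n (k - 1))" for n
  proof -
    have "Suc t \<in> {1..m}" using tm by simp
    moreover have "C (Suc t) (Suc t) = 1" using assms(5) by simp
    ultimately show ?thesis using sum.remove[of "{1..m}" "Suc t" "\<lambda>k. C (Suc t) k * digit n (k - 1)"] by simp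
  qed
  have R: "(\<Sum>k\<in>{1..m} - {Suc t}. C (Suc t) k * digit a (k - 1)) =
      (\<Sum>k\<in>{1..m} - {Suc t}. C (Suc t) k * digit b (k - 1))"
  proof (rule sum.cong)
    fix k assume k: "k \<in> {1..m} - {Suc t}"
    show "C (Suc t) k * digit a (k - 1) = C (Suc t) k * digit b (k - 1)"
    proof (cases "k < Suc t")
      case True then show ?thesis using assms(4) k unfolding upper_def by auto
    next
      case False then have "t < k - 1" using k by auto
      then show ?thesis using above by simp
    qed
  qed simp
  have md: "(x + r) mod 2 \<noteq> (y + r) mod 2" if "x \<noteq> y" "x \<le> 1" "y \<le> (1::nat)" for x y r
    using that by presburger
  have "sobol_digit C a (Suc t) \<noteq> sobol_digit C b (Suc t)"
    unfolding sd_alt[OF assms(1)] sd_alt[OF assms(2)] split R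
    using tS digit_le1[of a t] digit_le1[of b t] md by simp
  then show ?thesis using tm by force
qed

lemma diag_C1: "\<forall>i. 0 < i \<longrightarrow> C1 i i = 1" by (simp add: C1_def)
lemma diag_C2: "\<forall>i. 0 < i \<longrightarrow> C2 i i = 1" by (simp add: C2_def)

lemma coord_sep:
  assumes "a < 2 ^ m" "b < 2 ^ m" "a \<noteq> b" "upper C" "\<forall>i. 0 < i \<longrightarrow> C i i = 1"
  shows "\<bar>sobol_coord C a - sobol_coord C b\<bar> \<ge> 1 / 2 ^ m"
proof -
  have "Xv C m a \<noteq> Xv C m b" using diff_digit[OF assms] Xv_inj by blast
  then have "\<bar>real (Xv C m a) - real (Xv C m b)\<bar> \<ge> 1" by linarith
  then have "\<bar>real (Xv C m a) - real (Xv C m b)\<bar> / 2 ^ m \<ge> 1 / 2 ^ m"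
    by (simp add: divide_right_mono)
  moreover have "sobol_coord C a - sobol_coord C b = (real (Xv C m a) - real (Xv C m b)) / 2 ^ m"
    using coord_Xv[OF assms(1,4)] coord_Xv[OF assms(2,4)] by (simp add: diff_divide_distrib)
  ultimately show ?thesis by simp
qed

lemma dist_lower:
  assumes "a < 2 ^ m" "b < 2 ^ m" "a \<noteq> b"
  shows "dist (sobol a) (sobol b) \<ge> sqrt 2 / 2 ^ m"
proof -
  let ?d = "(1::real) / 2 ^ m"
  have x: "\<bar>sobol_coord C1 a - sobol_coord C1 b\<bar> \<ge> ?d"
    using coord_sep[OF assms upper_C1 diag_C1] .
  have y: "\<bar>sobol_coord C2 a - sobol_coord C2 b\<bar> \<ge> ?d"
    using coord_sep[OF assms upper_C2 diag_C2] .
  have x2: "(sobol_coord C1 a - sobol_coord C1 b)^2 \<ge> ?d^2"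
    using x abs_le_square_iff[of ?d] by simp
  have y2: "(sobol_coord C2 a - sobol_coord C2 b)^2 \<ge> ?d^2"
    using y abs_le_square_iff[of ?d] by simp
  have "sqrt 2 / 2 ^ m = sqrt (2 * ?d^2)"
    by (simp add: real_sqrt_mult power_divide real_sqrt_divide)
  also have "\<dots> \<le> sqrt ((sobol_coord C1 a - sobol_coord C1 b)^2 + (sobol_coord C2 a - sobol_coord C2 b)^2)"
    using x2 y2 by simp
  also have "\<dots> = dist (sobol a) (sobol b)"
    unfolding sobol_def dist_Pair_Pair dist_real_def by simp
  finally show ?thesis .
qed

lemma even_binom_pow:
  assumes "0 < s" "s < 2 ^ w"
  shows "even ((2::nat) ^ w choose s)"
proof (rule ccontr)
  assume od: "odd ((2::nat) ^ w choose s)"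
  obtain k where s: "s = Suc k" using assms(1) by (cases s) auto
  obtain N where N: "(2::nat) ^ w = Suc N" by (metis not0_implies_Suc power_not_zero zero_neq_numeral)
  have "s * (2 ^ w choose s) = 2 ^ w * (N choose k)" using Suc_times_binomial[of k N] s N by simp
  then have "(2::nat) ^ w dvd s * (2 ^ w choose s)" by (metis dvd_triv_left)
  moreover have "coprime ((2::nat) ^ w) (2 ^ w choose s)" using od by simp
  ultimately have "(2::nat) ^ w dvd s" using coprime_dvd_mult_left_iff by blast
  then have "2 ^ w \<le> s" using assms(1) by (simp add: dvd_imp_le)
  then show False using assms(2) by simp
qed

lemma odd_binom:
  assumes "s \<le> 2 ^ w - 1"
  shows "odd (((2::nat) ^ w - 1) choose s)"
  using assms
proof (induction s)
  case 0 then show ?case by simp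
next
  case (Suc s)
  obtain N where N: "(2::nat) ^ w = Suc N" by (metis not0_implies_Suc power_not_zero zero_neq_numeral)
  have "even (Suc N choose Suc s)" using even_binom_pow[of "Suc s" w] Suc.prems N by simp
  moreover have "odd (N choose s)" using Suc N by simp
  ultimately show ?case using N by simp
qed

lemma reidx: "(\<Sum>k\<in>{1..m}. g (k - 1)) = (\<Sum>j<m. (g (j::nat)::nat))"
  by (induction m) (auto simp: atLeastAtMostSuc_conv)

lemma digitM:
  assumes "j < m"
  shows "digit (2 ^ m - 2) j = (if 1 \<le> j then 1 else 0)"
proof -
  let ?e = "\<lambda>j::nat. if 1 \<le> j then 1 else (0::nat)"
  obtain m' where m': "m = Suc m'" using assms by (cases m) auto
  have "(\<Sum>j<m. (2::nat) ^ j) = 1 + (\<Sum>j<m. ?e j * 2 ^ j)"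
    unfolding m' sum.lessThan_Suc_shift by simp
  moreover have "(\<Sum>j<m. (2::nat) ^ j) = 2 ^ m - 1" using sum_power2[of m] by (simp add: atLeast0LessThan)
  ultimately have "(\<Sum>j<m. ?e j * 2 ^ j) = 2 ^ m - 2" by simp
  then show ?thesis using digit_sum[of ?e j m] assms by simp
qed

lemma sumM:
  assumes "1 \<le> m"
  shows "(\<Sum>k\<in>{1..m}. f (k - 1) * digit (2 ^ m - 2) (k - 1)) + f 0 = (\<Sum>j<m. (f j :: nat))"
proof -
  obtain m' where m': "m = Suc m'" using assms by (cases m) auto
  have "(\<Sum>k\<in>{1..m}. f (k - 1) * digit (2 ^ m - 2) (k - 1)) = (\<Sum>j<m. f j * digit (2 ^ m - 2) j)"
    by (rule reidx)
  also have "\<dots> = (\<Sum>j<m. f j * (if 1 \<le> j then 1 else 0))"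
    by (rule sum.cong) (auto simp: digitM)
  finally show ?thesis unfolding m' sum.lessThan_Suc_shift by simp
qed

lemma sdM_gen:
  assumes "1 \<le> m" "1 \<le> i" "upper C"
    and h: "(\<Sum>j<m. C i (Suc j)) mod 2 = 1"
    and c1: "C i 1 = (if i = 1 then 1 else 0)"
  shows "sobol_digit C (2 ^ m - 2) i = (if 2 \<le> i then 1 else 0)"
proof -
  have lt: "(2::nat) ^ m - 2 < 2 ^ m" by simp
  have "(\<Sum>k\<in>{1..m}. C i k * digit (2 ^ m - 2) (k - 1)) = (\<Sum>k\<in>{1..m}. C i (Suc (k - 1)) * digit (2 ^ m - 2) (k - 1))"
    by (rule sum.cong) auto
  then have T: "(\<Sum>k\<in>{1..m}. C i k * digit (2 ^ m - 2) (k - 1)) + C i 1 = (\<Sum>j<m. C i (Suc j))"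
    using sumM[OF assms(1), of "\<lambda>j. C i (Suc j)"] by simp
  define TT where "TT = (\<Sum>k\<in>{1..m}. C i k * digit (2 ^ m - 2) (k - 1))"
  have h2: "(TT + C i 1) mod 2 = 1" using h T unfolding TT_def by simp
  have "TT mod 2 = (if 2 \<le> i then 1 else 0)"
  proof (cases "i = 1")
    case True then have "(TT + 1) mod 2 = 1" using h2 c1 by simp
    then show ?thesis using True by presburger
  next
    case False then show ?thesis using h2 c1 assms(2) by simp
  qed
  then show ?thesis unfolding sd_alt[OF lt] TT_def .
qed

lemma sdM_C1:
  assumes "1 \<le> m" "1 \<le> i" "i \<le> m"
  shows "sobol_digit C1 (2 ^ m - 2) i = (if 2 \<le> i then 1 else 0)"
proof (rule sdM_gen[OF assms(1,2) upper_C1])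
  have "(\<Sum>j<m. C1 i (Suc j)) = (\<Sum>j\<in>{..<m}. if j = i - 1 then 1 else 0)"
    by (rule sum.cong) (use assms in \<open>auto simp: C1_def\<close>)
  also have "\<dots> = 1" using assms by (simp add: sum.delta)
  finally show "(\<Sum>j<m. C1 i (Suc j)) mod 2 = 1" by simp
qed (simp add: C1_def)

lemma sdM_C2:
  assumes "1 \<le> m" "1 \<le> i" "i \<le> m" "m = 2 ^ w - 1"
  shows "sobol_digit C2 (2 ^ m - 2) i = (if 2 \<le> i then 1 else 0)"
proof (rule sdM_gen[OF assms(1,2) upper_C2])
  obtain r where r: "i = Suc r" using assms(2) by (cases i) auto
  obtain m' where m': "m = Suc m'" using assms(1) by (cases m) auto
  have "(\<Sum>j<m. C2 i (Suc j)) mod 2 = (\<Sum>j<m. (j choose r) mod 2) mod 2"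
    by (simp add: C2_def r)
  also have "\<dots> = (\<Sum>j<m. j choose r) mod 2" by (rule mod_sum_eq)
  also have "(\<Sum>j<m. j choose r) = m choose i"
  proof -
    have "(\<Sum>j\<le>m'. j choose r) = Suc m' choose Suc r" by (rule sum_choose_upper)
    then show ?thesis unfolding m' r lessThan_Suc_atMost .
  qed
  also have "(m choose i) mod 2 = 1" using odd_binom[of i w] assms by (simp add: odd_iff_mod_2_eq_one)
  finally show "(\<Sum>j<m. C2 i (Suc j)) mod 2 = 1" .
  have c: "C2 i 1 = (if i = 1 then 1 else 0)" by (simp add: C2_def r binomial_eq_0)
  show "C2 i 1 = (if i = 1 then 1 else 0)" by (rule c)
qed

lemma sd1_C1: "sobol_digit C1 1 i = (if i = 1 then 1 else 0)"
  by (simp add: sobol_digit_def C1_def digit_def)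

lemma sd1_C2: "1 \<le> i \<Longrightarrow> sobol_digit C2 1 i = (if i = 1 then 1 else 0)"
  by (cases i) (simp_all add: sobol_digit_def C2_def digit_def binomial_eq_0)

lemma geom: "(\<Sum>i<m. 1 / 2 ^ Suc i :: real) = 1 - 1 / 2 ^ m"
  by (induction m) (auto simp: field_simps)

lemma coord1:
  assumes "1 \<le> m" "upper C" "\<forall>i. 1 \<le> i \<longrightarrow> i \<le> m \<longrightarrow> sobol_digit C 1 i = (if i = 1 then 1 else 0)"
  shows "sobol_coord C 1 = 1 / 2"
proof -
  have lt: "(1::nat) < 2 ^ m" using assms(1) one_less_power[of "2::nat" m] by simp
  obtain m' where m': "m = Suc m'" using assms(1) by (cases m) auto
  have "sobol_coord C 1 = (\<Sum>i<m. real (sobol_digit C 1 (Suc i)) / 2 ^ Suc i)"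
    by (rule coord_finite[OF lt assms(2)])
  also have "\<dots> = (\<Sum>i<m. (if i = 0 then 1 / 2 else 0))"
    by (rule sum.cong) (use assms(3) in auto)
  also have "\<dots> = 1 / 2" using assms(1) by (simp add: sum.delta)
  finally show ?thesis .
qed

lemma coordM:
  assumes "1 \<le> m" "upper C" "\<forall>i. 1 \<le> i \<longrightarrow> i \<le> m \<longrightarrow> sobol_digit C (2 ^ m - 2) i = (if 2 \<le> i then 1 else 0)"
  shows "sobol_coord C (2 ^ m - 2) = 1 / 2 - 1 / 2 ^ m"
proof -
  have lt: "(2::nat) ^ m - 2 < 2 ^ m" by simp
  obtain m' where m': "m = Suc m'" using assms(1) by (cases m) auto
  have "sobol_coord C (2 ^ m - 2) = (\<Sum>i<m. real (sobol_digit C (2 ^ m - 2) (Suc i)) / 2 ^ Suc i)"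
    by (rule coord_finite[OF lt assms(2)])
  also have "\<dots> = (\<Sum>i<m. (if 1 \<le> i then 1 / 2 ^ Suc i else 0))"
    by (rule sum.cong) (use assms(3) in auto)
  also have "\<dots> = (\<Sum>i<m. 1 / 2 ^ Suc i) - 1 / 2"
    unfolding m' sum.lessThan_Suc_shift by simp
  also have "\<dots> = 1 / 2 - 1 / 2 ^ m" unfolding geom by simp
  finally show ?thesis .
qed

theorem mainTheorem1:
  fixes w m n :: nat
  assumes "w > 1" and "m = 2 ^ w - 1" and "n = 2 ^ m - 1"
  shows "sep_radius n = 1 / (sqrt 2 * real (n + 1))"
proof -
  have "(2::nat) ^ 2 \<le> 2 ^ w" using assms(1) by (intro power_increasing) auto
  then have m3: "3 \<le> m" using assms(2) by simp
  then have m1: "1 \<le> m" by simp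
  have "(2::nat) ^ 3 \<le> 2 ^ m" using m3 by (intro power_increasing) auto
  then have pm: "8 \<le> (2::nat) ^ m" by simp
  define M where "M = (2::nat) ^ m - 2"
  define d where "d = sqrt 2 / 2 ^ m"
  let ?A = "{dist (sobol i) (sobol j) | i j. i < j \<and> j < n}"
  have c1: "sobol_coord C1 1 = 1 / 2" "sobol_coord C2 1 = 1 / 2"
    using coord1[OF m1 upper_C1] coord1[OF m1 upper_C2] sd1_C1 sd1_C2 by auto
  have cM: "sobol_coord C1 M = 1 / 2 - 1 / 2 ^ m" "sobol_coord C2 M = 1 / 2 - 1 / 2 ^ m"
    unfolding M_def using coordM[OF m1 upper_C1] coordM[OF m1 upper_C2] sdM_C1[OF m1] sdM_C2[OF m1 _ _ assms(2)]
    by auto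
  have "dist (sobol 1) (sobol M) = sqrt (2 * (1 / 2 ^ m)^2)"
    unfolding sobol_def dist_Pair_Pair dist_real_def c1 cM by simp
  also have "\<dots> = d" unfolding d_def by (simp add: real_sqrt_mult power_divide real_sqrt_divide)
  finally have dw: "dist (sobol 1) (sobol M) = d" .
  have inA: "d \<in> ?A"
  proof -
    have "1 < M" "M < n" using pm assms(3) unfolding M_def by auto
    then show ?thesis using dw by force
  qed
  have lb: "\<forall>y\<in>?A. d \<le> y"
  proof
    fix y assume "y \<in> ?A"
    then obtain i j where "y = dist (sobol i) (sobol j)" "i < j" "j < n" by blast
    moreover have "j < 2 ^ m" using \<open>j < n\<close> assms(3) by simp
    ultimately show "d \<le> y" unfolding d_def using dist_lower[of i m j] by simp
  qed
  have fin: "finite ?A"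
  proof -
    have "?A \<subseteq> (\<lambda>(i, j). dist (sobol i) (sobol j)) ` ({..<n} \<times> {..<n})" by auto
    then show ?thesis by (rule finite_subset) simp
  qed
  have "Min ?A = d" by (rule Min_eqI[OF fin]) (use lb inA in auto)
  then have "sep_radius n = d / 2" unfolding sep_radius_def by simp
  moreover have "real (n + 1) = 2 ^ m" using assms(3) by (simp add: of_nat_diff)
  moreover have "sqrt 2 / 2 ^ m / 2 = 1 / (sqrt 2 * (2::real) ^ m)"
  proof -
    have "1 / (sqrt 2 * (2::real) ^ m) = sqrt 2 * 1 / (sqrt 2 * (sqrt 2 * 2 ^ m))"
      by (rule mult_divide_mult_cancel_left[symmetric]) simp
    also have "\<dots> = sqrt 2 / (sqrt 2 * sqrt 2 * 2 ^ m)" by (simp only: mult.assoc mult_1_right)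
    also have "\<dots> = sqrt 2 / 2 ^ m / 2" by simp
    finally show ?thesis by (rule sym)
  qed
  ultimately show ?thesis unfolding d_def by simp
qed

end
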